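(* Let $A_o,A_i\in\mathbb R^{n_y\times n_x}$, let $B_o,B_i\in\mathbb R^{n_y\times n_y}$ and $C_o,C_i\in\mathbb R^{n_x\times n_x}$ be invertible. If the inclusion $y\in\{(A_o+B_o\Delta C_o)x:\|\Delta\|\le1\}$ contains the inclusion $y\in\{(A_i+B_i\Delta C_i)x:\|\Delta\|\le1\}$, then $\sigma_{\max}(\tilde B)\,\sigma_{\max}(\tilde C)\le1$, where $\tilde B=B_o^{-1}B_i$ and $\tilde C=C_iC_o^{-1}$.
   Context: $\|\cdot\|$ is the spectral norm and $\sigma_{\max}$ denotes the largest singular value. An inclusion contains another if every pair $(x,y)\in\mathbb C^{n_x}\times\mathbb C^{n_y}$ satisfying the second also satisfies the first. *)

theory Defs
  imports "HOL-Analysis.Analysis"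
begin

definition cmat :: "real ^ 'n ^ 'm \<Rightarrow> complex ^ 'n ^ 'm" where
  "cmat M = (\<chi> i j. complex_of_real (M $ i $ j))"

text \<open>Spectral norm (operator norm induced by the Euclidean norms), i.e. the
  largest singular value.\<close>
definition spec_norm :: "'a::real_normed_field ^ 'n ^ 'm \<Rightarrow> real" where
  "spec_norm M = onorm (\<lambda>v. M *v v)"

definition incl :: "real ^ 'nx ^ 'ny \<Rightarrow> real ^ 'ny ^ 'ny \<Rightarrow> real ^ 'nx ^ 'nx
     \<Rightarrow> ((complex ^ 'nx) \<times> (complex ^ 'ny)) set" where
  "incl A B C = {(x, y). \<exists>\<Delta> :: complex ^ 'nx ^ 'ny. spec_norm \<Delta> \<le> 1 \<and>
      y = (cmat A + cmat B ** \<Delta> ** cmat C) *v x}"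

end

theory Submission imports Defs begin

definition cvec :: "real ^ 'n \<Rightarrow> complex ^ 'n" where
  "cvec v = (\<chi> i. complex_of_real (v $ i))"

lemma cmat_cvec: "cmat M *v cvec v = cvec (M *v v)"
  by (simp add: cmat_def cvec_def vec_eq_iff matrix_vector_mult_def)

lemma cmat_mult: "cmat (A ** B) = cmat A ** cmat B"
  by (simp add: cmat_def vec_eq_iff matrix_matrix_mult_def)

lemma cmat_one: "cmat (mat 1) = mat 1"
  by (simp add: cmat_def vec_eq_iff mat_def)

lemma cvec_add: "cvec a + cvec b = cvec (a + b)"
  by (simp add: cvec_def vec_eq_iff)
lemma cvec_diff: "cvec a - cvec b = cvec (a - b)"
  by (simp add: cvec_def vec_eq_iff)
lemma cvec_scaleR: "c *\<^sub>R cvec a = cvec (c *\<^sub>R a)"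
  unfolding cvec_def vec_eq_iff by (simp add: scaleR_conv_of_real[where 'a=complex])

lemma norm_cvec: "norm (cvec v) = norm v"
  by (simp add: cvec_def norm_vec_def)

lemma inv_props:
  fixes A :: "'a::semiring_1 ^'n^'n"
  assumes "invertible A"
  shows "A ** matrix_inv A = mat 1" "matrix_inv A ** A = mat 1"
  using someI_ex[OF assms[unfolded invertible_def]] unfolding matrix_inv_def by auto

lemma norm_smult_vec:
  fixes x :: "complex ^ 'n"
  shows "norm (c *s x) = norm c * norm x"
  by (simp add: norm_vec_def norm_mult L2_set_right_distrib)


lemma rank_one:
  fixes v :: "real ^ 'n" and w :: "real ^ 'm"
  assumes "v \<noteq> 0" "norm w \<le> norm v"
  shows "\<exists>\<Delta> :: complex ^ 'n ^ 'm. spec_norm \<Delta> \<le> 1 \<and> \<Delta> *v cvec v = cvec w"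
proof -
  define D :: "complex ^ 'n ^ 'm" where
    "D = (\<chi> i j. complex_of_real (w $ i * v $ j / (norm v)^2))"
  have nv: "norm v > 0" using assms by simp
  have sq: "(\<Sum>j\<in>UNIV. v $ j * v $ j) = (norm v)^2"
    by (simp add: power2_norm_eq_inner inner_vec_def)
  have "D *v cvec v = cvec w"
  proof -
    have "(D *v cvec v) $ i = cvec w $ i" for i
    proof -
      have "(D *v cvec v) $ i = complex_of_real (\<Sum>j\<in>UNIV. w $ i * v $ j / (norm v)^2 * v $ j)"
        by (simp add: D_def cvec_def matrix_vector_mult_def)
      also have "(\<Sum>j\<in>UNIV. w $ i * v $ j / (norm v)^2 * v $ j) = w $ i / (norm v)^2 * (\<Sum>j\<in>UNIV. v $ j * v $ j)"
        by (simp add: sum_distrib_left sum_divide_distrib algebra_simps)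
      also have "\<dots> = w $ i" using nv sq by simp
      finally show ?thesis by (simp add: cvec_def)
    qed
    then show ?thesis by (simp add: vec_eq_iff)
  qed
  moreover have "spec_norm D \<le> 1"
    unfolding spec_norm_def
  proof (rule onorm_le)
    fix u :: "complex ^ 'n"
    define c where "c = (\<Sum>j\<in>UNIV. complex_of_real (v $ j / (norm v)^2) * u $ j)"
    define au :: "real ^ 'n" where "au = (\<chi> j. norm (u $ j))"
    define av :: "real ^ 'n" where "av = (\<chi> j. abs (v $ j))"
    have Du: "D *v u = c *s cvec w"
      by (simp add: vec_eq_iff D_def c_def cvec_def matrix_vector_mult_def sum_distrib_left algebra_simps)
    have nau: "norm au = norm u" by (simp add: au_def norm_vec_def)
    have nav: "norm av = norm v" by (simp add: av_def norm_vec_def)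
    have "norm c \<le> (\<Sum>j\<in>UNIV. norm (complex_of_real (v $ j / (norm v)^2) * u $ j))"
      unfolding c_def by (rule norm_sum)
    also have "\<dots> = (av \<bullet> au) / (norm v)^2"
      by (simp add: inner_vec_def av_def au_def norm_mult norm_divide norm_power sum_divide_distrib abs_mult)
    also have "\<dots> \<le> norm v * norm u / (norm v)^2"
      using norm_cauchy_schwarz[of av au] nav nau by (simp add: divide_right_mono)
    also have "\<dots> = norm u / norm v" using nv by (simp add: power2_eq_square)
    finally have nc: "norm c \<le> norm u / norm v" .
    have "norm (D *v u) = norm c * norm w" by (simp add: Du norm_smult_vec norm_cvec)
    also have "\<dots> \<le> (norm u / norm v) * norm v"
      by (rule mult_mono[OF nc assms(2)]) auto
    also have "\<dots> = 1 * norm u" using nv by simp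
    finally show "norm (D *v u) \<le> 1 * norm u" .
  qed
  ultimately show ?thesis by blast
qed


lemma mv_scaleR: "(M :: real^'n^'m) *v (c *\<^sub>R v) = c *\<^sub>R (M *v v)"
  by (simp add: vec_eq_iff matrix_vector_mult_def sum_distrib_left algebra_simps)

lemma cnorm_le:
  fixes D :: "complex ^ 'n ^ 'm"
  assumes "spec_norm D \<le> 1"
  shows "norm (D *v u) \<le> norm u"
proof -
  have "norm (D *v u) \<le> spec_norm D * norm u"
    unfolding spec_norm_def by (rule onorm) simp
  also have "\<dots> \<le> 1 * norm u" by (rule mult_right_mono[OF assms]) simp
  finally show ?thesis by simp
qed

lemma incl_mem:
  assumes "spec_norm \<Delta> \<le> 1" "\<Delta> *v cvec (C *v x) = cvec w"
  shows "(cvec x, cvec (A *v x + B *v w)) \<in> incl A B C"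
proof -
  have "(cmat A + cmat B ** \<Delta> ** cmat C) *v cvec x = cvec (A *v x + B *v w)"
    by (simp add: matrix_vector_mult_add_rdistrib matrix_vector_mul_assoc[symmetric] cmat_cvec assms(2) cvec_add)
  then show ?thesis using assms(1) unfolding incl_def by (auto intro!: exI[of _ \<Delta>])
qed

lemma incl_mem2:
  assumes "(cvec x, cvec y) \<in> incl A B C"
  shows "\<exists>\<Delta>. spec_norm \<Delta> \<le> 1 \<and> cvec y = cvec (A *v x) + cmat B *v (\<Delta> *v cvec (C *v x))"
proof -
  from assms obtain \<Delta> where "spec_norm \<Delta> \<le> 1" "cvec y = (cmat A + cmat B ** \<Delta> ** cmat C) *v cvec x"
    unfolding incl_def by blast
  then show ?thesis
    by (auto simp add: matrix_vector_mult_add_rdistrib matrix_vector_mul_assoc[symmetric] cmat_cvec)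
qed

theorem lemma2:
  fixes Ao Ai :: "real ^ 'nx ^ 'ny"
    and Bo Bi :: "real ^ 'ny ^ 'ny"
    and Co Ci :: "real ^ 'nx ^ 'nx"
  assumes "invertible Bo" "invertible Bi" "invertible Co" "invertible Ci"
    and "incl Ai Bi Ci \<subseteq> incl Ao Bo Co"
  shows "spec_norm (matrix_inv Bo ** Bi) * spec_norm (Ci ** matrix_inv Co) \<le> 1"
proof -
  define Bt where "Bt = matrix_inv Bo ** Bi"
  define Ct where "Ct = Ci ** matrix_inv Co"
  have key: "norm (Bt *v w) \<le> norm (Co *v x)" if hw: "norm w \<le> norm (Ci *v x)" for x w
  proof (cases "Ci *v x = 0")
    case True
    then have "w = 0" using hw by simp
    then show ?thesis by simp
  next
    case False
    obtain D1 :: "complex ^ 'nx ^ 'ny" where D1: "spec_norm D1 \<le> 1" "D1 *v cvec (Ci *v x) = cvec w"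
      using rank_one[OF False hw] by blast
    obtain D2 :: "complex ^ 'nx ^ 'ny" where D2: "spec_norm D2 \<le> 1" "D2 *v cvec (Ci *v x) = cvec (- w)"
      using rank_one[OF False, of "- w"] hw by auto
    have m1: "(cvec x, cvec (Ai *v x + Bi *v w)) \<in> incl Ao Bo Co"
      using incl_mem[OF D1] assms(5) by blast
    have m2: "(cvec x, cvec (Ai *v x + Bi *v (- w))) \<in> incl Ao Bo Co"
      using incl_mem[OF D2] assms(5) by blast
    obtain E1 where E1: "spec_norm E1 \<le> 1"
      "cvec (Ai *v x + Bi *v w) = cvec (Ao *v x) + cmat Bo *v (E1 *v cvec (Co *v x))"
      using incl_mem2[OF m1] by blast
    obtain E2 where E2: "spec_norm E2 \<le> 1"
      "cvec (Ai *v x + Bi *v (- w)) = cvec (Ao *v x) + cmat Bo *v (E2 *v cvec (Co *v x))"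
      using incl_mem2[OF m2] by blast
    define u where "u = cvec (Co *v x)"
    define d where "d = E1 *v u - E2 *v u"
    have "cmat Bo *v d = cvec (Ai *v x + Bi *v w) - cvec (Ai *v x + Bi *v (- w))"
      using E1(2) E2(2) by (simp add: d_def u_def matrix_vector_mult_diff_distrib)
    also have "\<dots> = cvec (2 *\<^sub>R (Bi *v w))"
    proof -
      have "Bi *v (- w) = - (Bi *v w)"
        by (simp add: vec_eq_iff matrix_vector_mult_def sum_negf)
      then show ?thesis by (simp add: cvec_diff scaleR_2)
    qed
    finally have bd: "cmat Bo *v d = cvec (2 *\<^sub>R (Bi *v w))" .
    have "d = cmat (matrix_inv Bo) *v (cmat Bo *v d)"
      by (simp add: matrix_vector_mul_assoc flip: cmat_mult add: inv_props[OF assms(1)] cmat_one)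
    also have "\<dots> = cvec (2 *\<^sub>R (Bt *v w))"
      by (simp add: bd cmat_cvec Bt_def matrix_vector_mul_assoc[symmetric] mv_scaleR)
    finally have "norm d = 2 * norm (Bt *v w)" by (simp add: norm_cvec)
    moreover have "norm d \<le> norm (E1 *v u) + norm (E2 *v u)"
      unfolding d_def by (rule norm_triangle_ineq4)
    moreover have "norm (E1 *v u) \<le> norm u" "norm (E2 *v u) \<le> norm u"
      using cnorm_le E1(1) E2(1) by auto
    ultimately show ?thesis by (simp add: u_def norm_cvec)
  qed
  define \<beta> where "\<beta> = spec_norm Bt"
  have b0: "\<beta> \<ge> 0" unfolding \<beta>_def spec_norm_def by (rule onorm_pos_le) simp
  have step: "\<beta> * norm (Ci *v x) \<le> norm (Co *v x)" for x
  proof (cases "Ci *v x = 0")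
    case True then show ?thesis by simp
  next
    case False
    have nz: "norm (Ci *v x) > 0" using False by simp
    have "\<beta> \<le> norm (Co *v x) / norm (Ci *v x)"
      unfolding \<beta>_def spec_norm_def
    proof (rule onorm_le)
      fix w :: "real ^ 'ny"
      show "norm (Bt *v w) \<le> norm (Co *v x) / norm (Ci *v x) * norm w"
      proof (cases "w = 0")
        case True then show ?thesis by simp
      next
        case False
        have nw: "norm w > 0" using False by simp
        define w' where "w' = (norm (Ci *v x) / norm w) *\<^sub>R w"
        have "norm w' = norm (Ci *v x)" using nw nz by (simp add: w'_def)
        then have "norm (Bt *v w') \<le> norm (Co *v x)" using key by simp
        then have "(norm (Ci *v x) / norm w) * norm (Bt *v w) \<le> norm (Co *v x)"
          using nz nw by (simp add: w'_def mv_scaleR)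
        then show ?thesis using nz nw by (simp add: field_simps)
      qed
    qed
    then show ?thesis using nz by (simp add: field_simps)
  qed
  show ?thesis
  proof (cases "\<beta> = 0")
    case True then show ?thesis by (simp add: \<beta>_def Bt_def)
  next
    case False
    then have bp: "\<beta> > 0" using b0 by simp
    have "spec_norm Ct \<le> 1 / \<beta>"
      unfolding spec_norm_def
    proof (rule onorm_le)
      fix z :: "real ^ 'nx"
      have "\<beta> * norm (Ci *v (matrix_inv Co *v z)) \<le> norm (Co *v (matrix_inv Co *v z))"
        by (rule step)
      then have "\<beta> * norm (Ct *v z) \<le> norm z"
        by (simp add: Ct_def matrix_vector_mul_assoc inv_props[OF assms(3)])
      then show "norm (Ct *v z) \<le> 1 / \<beta> * norm z" using bp by (simp add: field_simps)
    qed
    then have "\<beta> * spec_norm Ct \<le> \<beta> * (1 / \<beta>)" using bp by (simp only: mult_left_mono less_imp_le)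
    then have "\<beta> * spec_norm Ct \<le> 1" using bp by simp
    then show ?thesis using bp by (simp add: \<beta>_def Bt_def Ct_def)
  qed
qed

end
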